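(* Let $N=2K+1$ with $K\in\mathbb N$, and let real numbers $x_{N,1}<\dots<x_{N,N}$ satisfy $x_{N,k}\in[-2,-1]$ and $x_{N,2K+2-k}=-x_{N,k}$ for all $k\le K$, and $x_{N,K+1}=0$. Let $\lambda_{N,K+1}=\frac12$ and $\lambda_{N,k}=\frac1{4K}$ for $k\neq K+1$. Let $V_{N,1},\dots,V_{N,N}$ solve the deterministic system $$\frac{d}{dt}V_{N,k}(t)=\sum_{j\neq k}\frac{2(\lambda_{N,k}+\lambda_{N,j})}{V_{N,k}(t)-V_{N,j}(t)},\qquad V_{N,k}(0)=x_{N,k},$$ and let $\alpha_{N,t}=\sum_{k=1}^N\lambda_{N,k}\delta_{V_{N,k}(t)}$. Then there exists $T_0>0$ such that the sequence $\{\alpha_{N,\cdot}\}_{N}$ (over $N=2K+1$, $K\in\mathbb N$) is tight in $\mathcal M(T_0)$.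
   Context: $\mathcal M(T)=C([0,T],\mathcal P(\mathbb R))$ with the topology of uniform convergence, where $\mathcal P(\mathbb R)$ is the space of probability measures on $\mathbb R$ with the topology of weak convergence. A sequence in $\mathcal M(T)$ is tight if it has a subsequence converging in distribution (for deterministic elements: a convergent subsequence). *)

theory Defs
  imports "HOL-Probability.Probability"
begin

definition lam :: "nat \<Rightarrow> nat \<Rightarrow> real" where
  "lam K k = (if k = K + 1 then 1/2 else 1 / (4 * real K))"

definition emp_measure :: "nat \<Rightarrow> (nat \<Rightarrow> real) \<Rightarrow> real measure" where
  "emp_measure K v = measure_of UNIV (sets borel)
     (\<lambda>A. ennreal (\<Sum>k = 1..2*K+1. lam K k * indicator A (v k)))"

text \<open>Levy metric on probability measures on the real line; it metrizes weak convergence.\<close>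
definition levy_dist :: "real measure \<Rightarrow> real measure \<Rightarrow> real" where
  "levy_dist M M' = Inf {e. e > 0 \<and> (\<forall>x. cdf M (x - e) - e \<le> cdf M' x \<and> cdf M' x \<le> cdf M (x + e) + e)}"

text \<open>The space M(T) = C([0,T], P(R)), P(R) with the weak topology (via the Levy metric).\<close>
definition M_space :: "real \<Rightarrow> (real \<Rightarrow> real measure) set" where
  "M_space T = {\<alpha>. (\<forall>t\<in>{0..T}. real_distribution (\<alpha> t)) \<and>
     (\<forall>t\<in>{0..T}. \<forall>e>0. \<exists>d>0. \<forall>s\<in>{0..T}. \<bar>s - t\<bar> < d \<longrightarrow> levy_dist (\<alpha> s) (\<alpha> t) < e)}"

definition M_conv :: "real \<Rightarrow> (nat \<Rightarrow> real \<Rightarrow> real measure) \<Rightarrow> (real \<Rightarrow> real measure) \<Rightarrow> bool" where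
  "M_conv T \<alpha>s \<alpha> \<longleftrightarrow> \<alpha> \<in> M_space T \<and>
     (\<forall>e>0. \<exists>n0. \<forall>n\<ge>n0. \<forall>t\<in>{0..T}. levy_dist (\<alpha>s n t) (\<alpha> t) < e)"

text \<open>Tightness of a deterministic sequence in M(T): it has a convergent subsequence.\<close>
definition M_tight :: "real \<Rightarrow> (nat \<Rightarrow> real \<Rightarrow> real measure) \<Rightarrow> bool" where
  "M_tight T \<alpha>s \<longleftrightarrow> (\<forall>n. \<alpha>s n \<in> M_space T) \<and>
     (\<exists>r \<alpha>. strict_mono r \<and> M_conv T (\<alpha>s \<circ> r) \<alpha>)"

end

theory Submission
  imports Defs
begin


lemma within_to_at:
  assumes "(f has_real_derivative D) (at s within {0..})" "0 < s"
  shows "(f has_real_derivative D) (at s)"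
proof -
  have sub: "{0<..} \<subseteq> ({0..} :: real set)" by auto
  have "(f has_real_derivative D) (at s within {0<..})"
    using has_field_derivative_subset[OF assms(1) sub] .
  then show ?thesis using at_within_open[of s "{0<..}"] assms(2) by simp
qed

lemma sym_double_sum:
  fixes u :: "nat \<Rightarrow> real" and w :: "nat \<Rightarrow> nat \<Rightarrow> real"
  assumes "\<And>k j. w k j = w j k"
  shows "(\<Sum>k\<in>I. \<Sum>j\<in>I. u k * (w k j * (u k - u j))) = (\<Sum>k\<in>I. \<Sum>j\<in>I. w k j * (u k - u j)^2) / 2"
proof -
  let ?S = "(\<Sum>k\<in>I. \<Sum>j\<in>I. u k * (w k j * (u k - u j)))"
  have "?S = (\<Sum>j\<in>I. \<Sum>k\<in>I. u k * (w k j * (u k - u j)))" by (rule sum.swap)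
  also have "\<dots> = (\<Sum>k\<in>I. \<Sum>j\<in>I. - u j * (w k j * (u k - u j)))"
  proof (rule sum.cong[OF refl], rule sum.cong[OF refl])
    fix a b show "u b * (w b a * (u b - u a)) = - u b * (w a b * (u a - u b))"
      using assms[of b a] by (simp add: algebra_simps)
  qed
  finally have "2 * ?S = ?S + (\<Sum>k\<in>I. \<Sum>j\<in>I. - u j * (w k j * (u k - u j)))" by simp
  also have "\<dots> = (\<Sum>k\<in>I. \<Sum>j\<in>I. w k j * (u k - u j)^2)"
    by (simp add: sum.distrib[symmetric] power2_eq_square algebra_simps)
  finally show ?thesis by simp
qed

lemma antisym_double_sum:
  fixes g :: "nat \<Rightarrow> real" and a :: "nat \<Rightarrow> nat \<Rightarrow> real"
  assumes "\<And>k j. a k j = - a j k"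
  shows "(\<Sum>k\<in>I. \<Sum>j\<in>I. g k * a k j) = (\<Sum>k\<in>I. \<Sum>j\<in>I. (g k - g j) * a k j) / 2"
proof -
  let ?S = "(\<Sum>k\<in>I. \<Sum>j\<in>I. g k * a k j)"
  have "?S = (\<Sum>j\<in>I. \<Sum>k\<in>I. g k * a k j)" by (rule sum.swap)
  also have "\<dots> = (\<Sum>k\<in>I. \<Sum>j\<in>I. - g j * a k j)"
  proof (rule sum.cong[OF refl], rule sum.cong[OF refl])
    fix x y show "g y * a y x = - g y * a x y"
      using assms[of y x] by simp
  qed
  finally have "2 * ?S = ?S + (\<Sum>k\<in>I. \<Sum>j\<in>I. - g j * a k j)" by simp
  also have "\<dots> = (\<Sum>k\<in>I. \<Sum>j\<in>I. (g k - g j) * a k j)"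
    by (simp add: sum.distrib[symmetric] algebra_simps)
  finally show ?thesis by simp
qed

locale sys =
  fixes K :: nat and V :: "nat \<Rightarrow> real \<Rightarrow> real" and x :: "nat \<Rightarrow> real"
  assumes K1: "K \<ge> 1"
    and incr: "\<And>i j. 1 \<le> i \<Longrightarrow> i < j \<Longrightarrow> j \<le> 2*K+1 \<Longrightarrow> x i < x j"
    and range: "\<And>k. 1 \<le> k \<Longrightarrow> k \<le> K \<Longrightarrow> x k \<in> {-2..-1}"
    and symm: "\<And>k. 1 \<le> k \<Longrightarrow> k \<le> K \<Longrightarrow> x (2*K+2-k) = - x k"
    and mid: "x (K+1) = 0"
    and init: "\<And>k. k \<in> {1..2*K+1} \<Longrightarrow> V k 0 = x k"
    and distinct: "\<And>k j t. k \<in> {1..2*K+1} \<Longrightarrow> j \<in> {1..2*K+1} \<Longrightarrow> j \<noteq> k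
                   \<Longrightarrow> t \<ge> 0 \<Longrightarrow> V k t \<noteq> V j t"
    and ode: "\<And>k t. k \<in> {1..2*K+1} \<Longrightarrow> t \<ge> 0 \<Longrightarrow>
       (V k has_real_derivative
          (\<Sum>j\<in>{1..2*K+1} - {k}. 2 * (lam K k + lam K j) / (V k t - V j t))) (at t within {0..})"
begin

abbreviation "I \<equiv> {1..2*K+1}"
definition "c k j = 2 * (lam K k + lam K j)"
definition "Fs k t = (\<Sum>j\<in>I. c k j / (V k t - V j t))"

lemma c_sym: "c k j = c j k" by (simp add: c_def)
lemma c_nonneg: "0 \<le> c k j" by (simp add: c_def lam_def)

lemma ode': assumes "k \<in> I" "t \<ge> 0" shows "(V k has_real_derivative Fs k t) (at t within {0..})"
proof -
  have "Fs k t = c k k / (V k t - V k t) + (\<Sum>j\<in>I - {k}. c k j / (V k t - V j t))"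
    unfolding Fs_def by (rule sum.remove[OF finite_atLeastAtMost assms(1)])
  then have "Fs k t = (\<Sum>j\<in>I - {k}. 2 * (lam K k + lam K j) / (V k t - V j t))"
    by (simp only: c_def diff_self div_by_0 add_0)
  then show ?thesis using ode[OF assms] by simp
qed

lemma cont: assumes "k \<in> I" shows "continuous_on {0..} (V k)"
  unfolding continuous_on_eq_continuous_within
  using ode'[OF assms] DERIV_continuous by blast

lemma order: assumes "i \<in> I" "j \<in> I" "i < j" "t \<ge> 0" shows "V i t < V j t"
proof (rule ccontr)
  assume "\<not> V i t < V j t"
  then have a: "V i t - V j t \<ge> 0" by simp
  have b: "V i 0 - V j 0 \<le> 0" using init assms incr[of i j] by force
  have "continuous_on {0..t} (\<lambda>s. V i s - V j s)"
    by (intro continuous_on_diff continuous_on_subset[OF cont] assms) auto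
  then obtain s where "0 \<le> s" "s \<le> t" "V i s - V j s = 0"
    using IVT'[of "\<lambda>s. V i s - V j s" 0 0 t] a b assms(4) by auto
  then show False using distinct[of i j s] assms by auto
qed

definition "sg k = 2*K+2-k"

lemma sg_I: "k \<in> I \<Longrightarrow> sg k \<in> I" by (auto simp: sg_def)
lemma sg_sg: "k \<in> I \<Longrightarrow> sg (sg k) = k" by (auto simp: sg_def)
lemma sg_lam: "k \<in> I \<Longrightarrow> lam K (sg k) = lam K k" by (auto simp: sg_def lam_def)
lemma sg_less: "k \<in> I \<Longrightarrow> j \<in> I \<Longrightarrow> k < j \<Longrightarrow> sg j < sg k" by (auto simp: sg_def)
lemma sg_x: assumes "k \<in> I" shows "x (sg k) = - x k"
proof -
  consider "k \<le> K" | "k = K+1" | "k \<ge> K+2" by linarith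
  then show ?thesis
  proof cases
    case 1 then show ?thesis using symm[of k] assms by (simp add: sg_def)
  next
    case 2 then show ?thesis using mid by (simp add: sg_def)
  next
    case 3
    have "x (2*K+2 - sg k) = - x (sg k)" using symm[of "sg k"] 3 assms by (auto simp: sg_def)
    then show ?thesis using sg_sg[OF assms] by (simp add: sg_def)
  qed
qed

lemma sum_reindex_sg: "(\<Sum>j\<in>I. h (sg j)) = (\<Sum>j\<in>I. h j)"
  by (rule sum.reindex_bij_witness[of _ sg sg]) (auto simp: sg_def)

definition "u k t = V k t + V (sg k) t"

lemma center: assumes "t \<ge> 0" shows "V (K+1) t = 0"
proof -
  define D where "D t = (\<Sum>k\<in>I. (u k t)^2)" for t
  define w where "w k j t = c k j / ((V k t - V j t) * (V (sg k) t - V (sg j) t))" for k j t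
  have wsym: "w k j t = w j k t" for k j t
    unfolding w_def c_def by (simp add: algebra_simps)
  have wnp: "w k j t \<le> 0" if "k \<in> I" "j \<in> I" "t \<ge> 0" for k j t
  proof -
    have "(V k t - V j t) * (V (sg k) t - V (sg j) t) \<le> 0"
    proof (cases k j rule: linorder_cases)
      case less
      then show ?thesis using order[of k j t] order[of "sg j" "sg k" t] sg_less sg_I that
        by (intro mult_nonpos_nonneg) auto
    next
      case greater
      then show ?thesis using order[of j k t] order[of "sg k" "sg j" t] sg_less sg_I that
        by (intro mult_nonneg_nonpos) auto
    qed simp
    then show ?thesis unfolding w_def using c_nonneg by (simp add: divide_nonneg_nonpos)
  qed
  have Fsum: "Fs k t + Fs (sg k) t = (\<Sum>j\<in>I. w k j t * (u k t - u j t))"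
    if "k \<in> I" "t \<ge> 0" for k t
  proof -
    have "Fs (sg k) t = (\<Sum>j\<in>I. c (sg k) (sg j) / (V (sg k) t - V (sg j) t))"
      unfolding Fs_def by (rule sum_reindex_sg[symmetric])
    also have "\<dots> = (\<Sum>j\<in>I. c k j / (V (sg k) t - V (sg j) t))"
      by (rule sum.cong[OF refl]) (simp only: c_def sg_lam that)
    finally have "Fs k t + Fs (sg k) t = (\<Sum>j\<in>I. c k j / (V k t - V j t) + c k j / (V (sg k) t - V (sg j) t))"
      unfolding Fs_def by (simp add: sum.distrib)
    also have "\<dots> = (\<Sum>j\<in>I. w k j t * (u k t - u j t))"
    proof (rule sum.cong)
      fix j assume j: "j \<in> I"
      show "c k j / (V k t - V j t) + c k j / (V (sg k) t - V (sg j) t) = w k j t * (u k t - u j t)"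
      proof (cases "j = k")
        case True then show ?thesis by (simp add: w_def)
      next
        case False
        have "sg j \<noteq> sg k" using False sg_sg j that by metis
        then have n1: "V k t - V j t \<noteq> 0" and n2: "V (sg k) t - V (sg j) t \<noteq> 0"
          using distinct[of k j t] distinct[of "sg k" "sg j" t] False j that sg_I by auto
        show ?thesis unfolding w_def u_def using n1 n2
          by (simp add: field_simps)
      qed
    qed simp
    finally show ?thesis .
  qed
  have Dder: "(D has_real_derivative (\<Sum>k\<in>I. 2 * u k t * (Fs k t + Fs (sg k) t))) (at t within {0..})"
    if "t \<ge> 0" for t
    unfolding D_def
  proof (rule DERIV_sum)
    fix k assume k: "k \<in> I"
    have "((\<lambda>t. u k t) has_real_derivative Fs k t + Fs (sg k) t) (at t within {0..})"
      unfolding u_def by (intro DERIV_add ode' sg_I k that)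
    from DERIV_power[OF this, of 2]
    show "((\<lambda>t. (u k t)^2) has_real_derivative 2 * u k t * (Fs k t + Fs (sg k) t)) (at t within {0..})"
      by (simp add: algebra_simps)
  qed
  have Dnp: "(\<Sum>k\<in>I. 2 * u k t * (Fs k t + Fs (sg k) t)) \<le> 0" if "t \<ge> 0" for t
  proof -
    have "(\<Sum>k\<in>I. 2 * u k t * (Fs k t + Fs (sg k) t)) = (\<Sum>k\<in>I. 2 * (\<Sum>j\<in>I. u k t * (w k j t * (u k t - u j t))))"
    proof (rule sum.cong[OF refl])
      fix k assume k: "k \<in> I"
      have "2 * u k t * (Fs k t + Fs (sg k) t) = 2 * (u k t * (\<Sum>j\<in>I. w k j t * (u k t - u j t)))"
        using Fsum[OF k that] by simp
      also have "\<dots> = 2 * (\<Sum>j\<in>I. u k t * (w k j t * (u k t - u j t)))"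
        by (simp only: sum_distrib_left)
      finally show "2 * u k t * (Fs k t + Fs (sg k) t) = 2 * (\<Sum>j\<in>I. u k t * (w k j t * (u k t - u j t)))" .
    qed
    also have "\<dots> = 2 * (\<Sum>k\<in>I. \<Sum>j\<in>I. u k t * (w k j t * (u k t - u j t)))"
      by (rule sum_distrib_left[symmetric])
    also have "\<dots> = (\<Sum>k\<in>I. \<Sum>j\<in>I. w k j t * (u k t - u j t)^2)"
      using sym_double_sum[where w="\<lambda>k j. w k j t" and u="\<lambda>k. u k t" and I=I, OF wsym] by linarith
    also have "\<dots> \<le> 0"
      by (intro sum_nonpos mult_nonpos_nonneg wnp that) auto
    finally show ?thesis .
  qed
  have D0: "D 0 = 0"
    unfolding D_def u_def
  proof (rule sum.neutral, rule ballI)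
    fix k assume k: "k \<in> I"
    have "V k 0 + V (sg k) 0 = 0" using init[OF k] init[OF sg_I[OF k]] sg_x[OF k] by simp
    then show "(V k 0 + V (sg k) 0)^2 = 0" by simp
  qed
  have Dcont: "continuous_on {0..t} D"
  proof -
    have "continuous_on {0..} D" unfolding continuous_on_eq_continuous_within
      using Dder DERIV_continuous by blast
    then show ?thesis by (rule continuous_on_subset) auto
  qed
  have "- D 0 \<le> - D t"
  proof (rule DERIV_nonneg_imp_increasing_open[OF assms])
    fix s :: real assume "0 < s" "s < t"
    then show "\<exists>y. DERIV (\<lambda>t. - D t) s :> y \<and> 0 \<le> y"
      using within_to_at[OF Dder[of s]] Dnp[of s] by (auto intro!: exI DERIV_minus)
  next
    show "continuous_on {0..t} (\<lambda>t. - D t)" by (intro continuous_on_minus Dcont)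
  qed
  then have "D t \<le> 0" using D0 by simp
  moreover have "(u (K+1) t)^2 \<le> D t"
    unfolding D_def by (rule member_le_sum) auto
  ultimately have "(u (K+1) t)^2 \<le> 0" by linarith
  then have "u (K+1) t = 0" by simp
  then show ?thesis by (simp add: u_def sg_def)
qed

end


lemma deriv_quad:
  fixes g :: "real \<Rightarrow> real"
  assumes "\<And>y. \<bar>g y - g x - D * (y - x)\<bar> \<le> C * (y - x)^2"
  shows "(g has_real_derivative D) (at x)"
proof -
  have "((\<lambda>h. (g (x + h) - g x) / h - D) \<longlongrightarrow> 0) (at 0)"
  proof (rule Lim_null_comparison)
    show "\<forall>\<^sub>F h in at 0. norm ((g (x + h) - g x) / h - D) \<le> C * \<bar>h\<bar>"
    proof (rule eventually_at_filter[THEN iffD2], rule always_eventually, intro allI impI)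
      fix h :: real assume h: "h \<noteq> 0"
      have "(g (x + h) - g x) / h - D = (g (x + h) - g x - D * h) / h" using h by (simp add: field_simps)
      then have "norm ((g (x + h) - g x) / h - D) = \<bar>g (x + h) - g x - D * h\<bar> / \<bar>h\<bar>" by simp
      also have "\<dots> \<le> C * h^2 / \<bar>h\<bar>" using assms[of "x+h"] by (intro divide_right_mono) auto
      also have "\<dots> = C * \<bar>h\<bar>"
      proof -
        have a: "h^2 = \<bar>h\<bar> * \<bar>h\<bar>" by (simp add: power2_eq_square)
        have b: "\<bar>h\<bar> \<noteq> 0" using h by simp
        have c: "h^2 / \<bar>h\<bar> = \<bar>h\<bar>" unfolding a using b by (rule nonzero_mult_div_cancel_right)
        have "C * h^2 / \<bar>h\<bar> = C * (h^2 / \<bar>h\<bar>)" by simp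
        then show ?thesis by (simp only: c)
      qed
      finally show "norm ((g (x + h) - g x) / h - D) \<le> C * \<bar>h\<bar>" .
    qed
    show "((\<lambda>h. C * \<bar>h\<bar>) \<longlongrightarrow> 0) (at 0)"
      by (rule tendsto_eq_intros | simp)+
  qed
  then have "((\<lambda>h. (g (x + h) - g x) / h) \<longlongrightarrow> D) (at 0)" by (rule LIM_zero_cancel)
  then show ?thesis by (simp add: DERIV_def)
qed

definition qq :: "real \<Rightarrow> real" where "qq y = (max 0 y)^2"

lemma qq_bound: "\<bar>qq y - qq x - 2 * max 0 x * (y - x)\<bar> \<le> 1 * (y - x)^2"
proof (cases "x \<ge> 0")
  case True
  then show ?thesis
  proof (cases "y \<ge> 0")
    case True
    then have "qq y - qq x - 2 * max 0 x * (y - x) = (y - x)^2" using \<open>x \<ge> 0\<close> by (simp add: qq_def power2_eq_square algebra_simps)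
    then show ?thesis by simp
  next
    case False
    have xy: "x * y \<le> 0" using False True by (intro mult_nonneg_nonpos) auto
    have e: "qq y - qq x - 2 * max 0 x * (y - x) = x * x - 2 * x * y"
      using False True by (simp add: qq_def power2_eq_square algebra_simps)
    have h1: "0 \<le> x * x - 2 * x * y"
    proof -
      have "0 \<le> x * x" by simp
      moreover have "2 * x * y = 2 * (x * y)" by simp
      ultimately show ?thesis using xy by linarith
    qed
    have h2: "x * x - 2 * x * y \<le> (y - x)^2" by (simp add: power2_eq_square algebra_simps)
    have "\<bar>x * x - 2 * x * y\<bar> \<le> (y - x)^2" using h1 h2 by simp
    then show ?thesis using e by simp
  qed
next
  case False
  then show ?thesis
  proof (cases "y \<ge> 0")
    case True
    have "y * y \<le> (y - x) * (y - x)" using False True by (intro mult_mono) auto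
    then show ?thesis using False True by (simp add: qq_def power2_eq_square algebra_simps)
  next
    case False then show ?thesis using \<open>\<not> x \<ge> 0\<close> by (simp add: qq_def)
  qed
qed

lemma qq_deriv: "(qq has_real_derivative 2 * max 0 x) (at x)"
  by (rule deriv_quad[OF qq_bound])

definition hh :: "real \<Rightarrow> real" where
  "hh u = 1 - 2 * qq u + 4 * qq (u - 1/2) - 2 * qq (u - 1)"
definition hh' :: "real \<Rightarrow> real" where
  "hh' u = - 4 * max 0 u + 8 * max 0 (u - 1/2) - 4 * max 0 (u - 1)"

lemma qq_shift_deriv: "((\<lambda>u. qq (u - a)) has_real_derivative 2 * max 0 (x - a)) (at x)"
proof -
  have "((\<lambda>u. u - a) has_real_derivative 1 - 0) (at x)" by (intro DERIV_diff DERIV_ident DERIV_const)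
  then show ?thesis
    using DERIV_chain2[where f=qq and g="\<lambda>u. u - a" and Da="2 * max 0 (x - a)" and Db=1 and x=x and s=UNIV]
      qq_deriv[of "x-a"] by simp
qed

lemma hh_deriv: "(hh has_real_derivative hh' u) (at u)"
proof -
  have "(hh has_real_derivative 0 - 2 * (2 * max 0 u) + 4 * (2 * max 0 (u - 1/2)) - 2 * (2 * max 0 (u - 1))) (at u)"
    unfolding hh_def
    by (intro DERIV_diff DERIV_add DERIV_cmult DERIV_const qq_deriv qq_shift_deriv)
  then show ?thesis by (simp add: hh'_def)
qed

lemma max0_lip: "\<bar>max 0 a - max 0 b\<bar> \<le> \<bar>a - b :: real\<bar>"
  by (simp add: max_def)

lemma hh'_lip: "\<bar>hh' a - hh' b\<bar> \<le> 16 * \<bar>a - b\<bar>"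
proof -
  have "\<bar>hh' a - hh' b\<bar> \<le> 4 * \<bar>max 0 a - max 0 b\<bar> + 8 * \<bar>max 0 (a - 1/2) - max 0 (b - 1/2)\<bar> + 4 * \<bar>max 0 (a - 1) - max 0 (b - 1)\<bar>"
    unfolding hh'_def by (smt (verit))
  also have "\<dots> \<le> 4 * \<bar>a - b\<bar> + 8 * \<bar>a - b\<bar> + 4 * \<bar>a - b\<bar>"
    using max0_lip[of a b] max0_lip[of "a - 1/2" "b - 1/2"] max0_lip[of "a - 1" "b - 1"] by simp
  finally show ?thesis by simp
qed

lemma hh_le0: "u \<le> 0 \<Longrightarrow> hh u = 1"
  by (simp add: hh_def qq_def)
lemma hh_ge1: "u \<ge> 1 \<Longrightarrow> hh u = 0"
  by (simp add: hh_def qq_def power2_eq_square algebra_simps)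
lemma hh_range: "0 \<le> hh u \<and> hh u \<le> 1"
proof -
  consider "u \<le> 0" | "0 \<le> u \<and> u \<le> 1/2" | "1/2 \<le> u \<and> u \<le> 1" | "u \<ge> 1" by linarith
  then show ?thesis
  proof cases
    case 2
    then have "hh u = 1 - 2 * u^2" by (simp add: hh_def qq_def)
    moreover have "u^2 \<le> 1/4" using 2 power_mono[of u "1/2" 2] by (simp add: power2_eq_square)
    ultimately show ?thesis by simp
  next
    case 3
    then have "hh u = 2 * (1 - u)^2" by (simp add: hh_def qq_def power2_eq_square algebra_simps)
    moreover have "(1 - u)^2 \<le> 1/4" using 3 power_mono[of "1 - u" "1/2" 2] by (simp add: power2_eq_square)
    ultimately show ?thesis by simp
  qed (auto simp: hh_le0 hh_ge1)
qed

lemma lip_from_deriv: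
  fixes H H' :: "real \<Rightarrow> real"
  assumes der: "\<And>t. t \<ge> 0 \<Longrightarrow> (H has_real_derivative H' t) (at t within {0..})"
    and bd: "\<And>t. t \<ge> 0 \<Longrightarrow> \<bar>H' t\<bar> \<le> B"
    and st: "0 \<le> s" "0 \<le> t"
  shows "\<bar>H t - H s\<bar> \<le> B * \<bar>t - s\<bar>"
proof -
  have contH: "continuous_on {0..} H" unfolding continuous_on_eq_continuous_within
    using der DERIV_continuous by blast
  have main: "\<bar>H b - H a\<bar> \<le> B * (b - a)" if ab: "0 \<le> a" "a \<le> b" for a b
  proof -
    have c: "continuous_on {a..b} H" using contH by (rule continuous_on_subset) (use ab in auto)
    have "(\<lambda>t. B * t - H t) a \<le> (\<lambda>t. B * t - H t) b"
    proof (rule DERIV_nonneg_imp_increasing_open[OF ab(2)])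
      fix y assume "a < y" "y < b"
      then show "\<exists>z. DERIV (\<lambda>t. B * t - H t) y :> z \<and> 0 \<le> z"
        using within_to_at[OF der[of y]] bd[of y] ab
        by (intro exI[of _ "B - H' y"]) (auto intro!: DERIV_diff DERIV_cmult_right[of "\<lambda>t. t" 1, simplified] DERIV_ident)
    qed (intro continuous_intros c)
    moreover have "(\<lambda>t. B * t + H t) a \<le> (\<lambda>t. B * t + H t) b"
    proof (rule DERIV_nonneg_imp_increasing_open[OF ab(2)])
      fix y assume "a < y" "y < b"
      then show "\<exists>z. DERIV (\<lambda>t. B * t + H t) y :> z \<and> 0 \<le> z"
        using within_to_at[OF der[of y]] bd[of y] ab
        by (intro exI[of _ "B + H' y"]) (auto intro!: DERIV_add DERIV_cmult_right[of "\<lambda>t. t" 1, simplified] DERIV_ident)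
    qed (intro continuous_intros c)
    moreover have "B * (b - a) = B * b - B * a" by (simp add: algebra_simps)
    ultimately show ?thesis by (simp only: abs_le_iff) linarith
  qed
  show ?thesis
  proof (cases "s \<le> t")
    case True then show ?thesis using main[of s t] st by simp
  next
    case False then show ?thesis using main[of t s] st by simp
  qed
qed


lemma term_bd:
  fixes p c d L :: real
  assumes "0 \<le> c" "\<bar>p\<bar> \<le> L * \<bar>d\<bar>" "0 \<le> L"
  shows "\<bar>p * (c / d)\<bar> \<le> L * c"
proof (cases "d = 0")
  case True then show ?thesis using assms by simp
next
  case False
  have "\<bar>p * (c / d)\<bar> = \<bar>p\<bar> * c / \<bar>d\<bar>" using assms(1) by (simp add: abs_mult abs_divide)
  also have "\<dots> \<le> L * \<bar>d\<bar> * c / \<bar>d\<bar>"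
    using assms by (intro divide_right_mono mult_right_mono) auto
  also have "\<dots> = L * c" using False by simp
  finally show ?thesis .
qed

lemma lam_nonneg: "0 \<le> lam K k"
  by (simp add: lam_def)

lemma sum_lam: assumes "K \<ge> 1" shows "(\<Sum>k = 1..2*K+1. lam K k) = 1"
proof -
  have fin: "finite {1..2*K+1}" by simp
  have mem: "K+1 \<in> {1..2*K+1}" by simp
  have "(\<Sum>k = 1..2*K+1. lam K k) = lam K (K+1) + (\<Sum>k \<in> {1..2*K+1} - {K+1}. lam K k)"
    using sum.remove[OF fin mem] by simp
  also have "(\<Sum>k \<in> {1..2*K+1} - {K+1}. lam K k) = (\<Sum>k \<in> {1..2*K+1} - {K+1}. 1/(4*real K))"
    by (rule sum.cong) (auto simp: lam_def)
  also have "\<dots> = real (2*K) / (4 * real K)"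
    using mem by (simp add: card_Diff_singleton)
  also have "real (2*K) / (4 * real K) = 1/2" using assms by (simp add: field_simps)
  finally show ?thesis by (simp add: lam_def)
qed

context sys begin

definition "mu = 1 / (4 * real K)"

lemma lam_split: "lam K k = mu + (if k = K+1 then 1/2 - mu else 0)"
  by (simp add: lam_def mu_def)

lemma sum_c: "(\<Sum>j\<in>I. c k j) = 2 * real (2*K+1) * lam K k + 2"
proof -
  have "(\<Sum>j\<in>I. c k j) = (\<Sum>j\<in>I. 2 * lam K k) + 2 * (\<Sum>j\<in>I. lam K j)"
    unfolding c_def by (simp add: sum.distrib sum_distrib_left algebra_simps)
  also have "(\<Sum>j\<in>I. lam K j) = 1" by (rule sum_lam[OF K1])
  also have "(\<Sum>j\<in>I. 2 * lam K k) = real (2*K+1) * (2 * lam K k)" by simp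
  finally show ?thesis by simp
qed

lemma sum_sum_c: "(\<Sum>k\<in>I. \<Sum>j\<in>I. c k j) = 4 * real (2*K+1)"
proof -
  have "(\<Sum>k\<in>I. \<Sum>j\<in>I. c k j) = (\<Sum>k\<in>I. 2 * real (2*K+1) * lam K k + 2)"
    by (simp only: sum_c)
  also have "\<dots> = (\<Sum>k\<in>I. 2 * real (2*K+1) * lam K k) + (\<Sum>k\<in>I. 2)"
    by (rule sum.distrib)
  also have "(\<Sum>k\<in>I. 2 * real (2*K+1) * lam K k) = 2 * real (2*K+1) * (\<Sum>k\<in>I. lam K k)"
    by (rule sum_distrib_left[symmetric])
  also have "(\<Sum>k\<in>I. (2::real)) = real (2*K+1) * 2" by simp
  also have "(\<Sum>k\<in>I. lam K k) = 1" by (rule sum_lam[OF K1])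
  finally show ?thesis by simp
qed

lemma Hest:
  fixes f f' :: "real \<Rightarrow> real"
  assumes fd: "\<And>y. (f has_real_derivative f' y) (at y)"
    and fl: "\<And>a b. \<bar>f' a - f' b\<bar> \<le> L * \<bar>a - b\<bar>"
    and st: "0 \<le> s" "0 \<le> t"
  shows "\<bar>(\<Sum>k\<in>I. lam K k * f (V k t)) - (\<Sum>k\<in>I. lam K k * f (V k s))\<bar> \<le> 3/2 * L * \<bar>t - s\<bar>"
proof -
  have L0: "0 \<le> L" using fl[of 1 0] by (smt (verit) abs_ge_zero mult_cancel_left1)
  define H where "H t = (\<Sum>k\<in>I. mu * f (V k t))" for t
  have split: "(\<Sum>k\<in>I. lam K k * f (V k t)) = H t + (1/2 - mu) * f 0" if "t \<ge> 0" for t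
  proof -
    have "(\<Sum>k\<in>I. lam K k * f (V k t)) = (\<Sum>k\<in>I. mu * f (V k t) + (if k = K+1 then (1/2 - mu) * f (V k t) else 0))"
      by (rule sum.cong[OF refl]) (simp add: lam_split algebra_simps)
    also have "\<dots> = H t + (1/2 - mu) * f (V (K+1) t)"
      by (simp add: sum.distrib H_def)
    also have "\<dots> = H t + (1/2 - mu) * f 0" using center[OF that] by simp
    finally show ?thesis .
  qed
  have Hder: "(H has_real_derivative mu * (\<Sum>k\<in>I. f' (V k t) * Fs k t)) (at t within {0..})"
    if "t \<ge> 0" for t
  proof -
    have "(H has_real_derivative (\<Sum>k\<in>I. mu * (f' (V k t) * Fs k t))) (at t within {0..})"
      unfolding H_def
    proof (rule DERIV_sum)
      fix k assume "k \<in> I"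
      show "((\<lambda>t. mu * f (V k t)) has_real_derivative mu * (f' (V k t) * Fs k t)) (at t within {0..})"
        by (rule DERIV_cmult, rule DERIV_chain2[OF fd ode'[OF \<open>k \<in> I\<close> that]])
    qed
    then show ?thesis by (simp only: sum_distrib_left)
  qed
  have Hbd: "\<bar>mu * (\<Sum>k\<in>I. f' (V k t) * Fs k t)\<bar> \<le> 3/2 * L" if "t \<ge> 0" for t
  proof -
    define g where "g k = f' (V k t)" for k
    define a where "a k j = c k j / (V k t - V j t)" for k j
    have anti: "a k j = - a j k" for k j
      unfolding a_def c_sym[of j k] by (metis divide_minus_right minus_diff_eq)
    have "(\<Sum>k\<in>I. f' (V k t) * Fs k t) = (\<Sum>k\<in>I. \<Sum>j\<in>I. g k * a k j)"
      unfolding Fs_def g_def a_def by (simp only: sum_distrib_left)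
    also have "\<dots> = (\<Sum>k\<in>I. \<Sum>j\<in>I. (g k - g j) * a k j) / 2"
      by (rule antisym_double_sum[OF anti])
    finally have eq: "(\<Sum>k\<in>I. f' (V k t) * Fs k t) = (\<Sum>k\<in>I. \<Sum>j\<in>I. (g k - g j) * a k j) / 2" .
    have "\<bar>\<Sum>k\<in>I. \<Sum>j\<in>I. (g k - g j) * a k j\<bar> \<le> (\<Sum>k\<in>I. \<Sum>j\<in>I. \<bar>(g k - g j) * a k j\<bar>)"
      by (rule order_trans[OF sum_abs sum_mono]) (rule sum_abs)
    also have "\<dots> \<le> (\<Sum>k\<in>I. \<Sum>j\<in>I. L * c k j)"
      unfolding a_def g_def
      by (intro sum_mono term_bd c_nonneg fl L0)
    also have "\<dots> = L * (4 * real (2*K+1))"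
      by (simp only: sum_distrib_left[symmetric] sum_sum_c)
    finally have b: "\<bar>\<Sum>k\<in>I. \<Sum>j\<in>I. (g k - g j) * a k j\<bar> \<le> L * (4 * real (2*K+1))" .
    have mu0: "0 \<le> mu" by (simp add: mu_def)
    have "\<bar>mu * (\<Sum>k\<in>I. f' (V k t) * Fs k t)\<bar> = mu * (\<bar>\<Sum>k\<in>I. \<Sum>j\<in>I. (g k - g j) * a k j\<bar> / 2)"
      unfolding eq using mu0 by (simp add: abs_mult)
    also have "\<dots> \<le> mu * (L * (4 * real (2*K+1)) / 2)"
      using b mu0 by (intro mult_left_mono divide_right_mono) auto
    also have "\<dots> = L * ((2 * real K + 1) / (2 * real K))"
      using K1 by (simp add: mu_def field_simps)
    also have "\<dots> \<le> L * (3/2)"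
      using K1 L0 by (intro mult_left_mono) (auto simp: field_simps)
    finally show ?thesis by simp
  qed
  have "\<bar>H t - H s\<bar> \<le> 3/2 * L * \<bar>t - s\<bar>"
    by (rule lip_from_deriv[OF Hder Hbd st])
  then show ?thesis using split[OF st(1)] split[OF st(2)] by simp
qed

lemma cdf_est:
  assumes st: "0 \<le> s" "0 \<le> t" and ep: "0 < \<epsilon>"
  shows "(\<Sum>k\<in>I. lam K k * indicator {..a} (V k t)) \<le> (\<Sum>k\<in>I. lam K k * indicator {..a+\<epsilon>} (V k s)) + 24 * \<bar>t - s\<bar> / \<epsilon>^2"
proof -
  define f where "f y = hh ((y - a) / \<epsilon>)" for y
  define f' where "f' y = hh' ((y - a) / \<epsilon>) * (1 / \<epsilon>)" for y
  have fd: "(f has_real_derivative f' y) (at y)" for y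
  proof -
    have "((\<lambda>y. (y - a) / \<epsilon>) has_real_derivative (1 - 0) / \<epsilon>) (at y)"
      by (intro DERIV_cdivide DERIV_diff DERIV_ident DERIV_const)
    then have h2: "((\<lambda>y. (y - a) / \<epsilon>) has_real_derivative 1 / \<epsilon>) (at y)" by simp
    show ?thesis unfolding f_def f'_def by (rule DERIV_chain2[OF hh_deriv h2])
  qed
  have fl: "\<bar>f' p - f' q\<bar> \<le> (16 / \<epsilon>^2) * \<bar>p - q\<bar>" for p q
  proof -
    have "f' p - f' q = (hh' ((p - a) / \<epsilon>) - hh' ((q - a) / \<epsilon>)) / \<epsilon>"
      unfolding f'_def by (simp add: diff_divide_distrib)
    then have "\<bar>f' p - f' q\<bar> = \<bar>hh' ((p - a) / \<epsilon>) - hh' ((q - a) / \<epsilon>)\<bar> / \<epsilon>"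
      using ep by (simp add: abs_divide)
    also have "\<dots> \<le> 16 * \<bar>(p - a) / \<epsilon> - (q - a) / \<epsilon>\<bar> / \<epsilon>"
      using ep by (intro divide_right_mono hh'_lip) auto
    also have "\<dots> = (16 / \<epsilon>^2) * \<bar>p - q\<bar>"
      using ep by (simp add: diff_divide_distrib[symmetric] abs_divide power2_eq_square)
    finally show ?thesis .
  qed
  have est: "\<bar>(\<Sum>k\<in>I. lam K k * f (V k t)) - (\<Sum>k\<in>I. lam K k * f (V k s))\<bar> \<le> 3/2 * (16 / \<epsilon>^2) * \<bar>t - s\<bar>"
    by (rule Hest[OF fd fl st])
  have lo: "(\<Sum>k\<in>I. lam K k * indicator {..a} (V k t)) \<le> (\<Sum>k\<in>I. lam K k * f (V k t))"
  proof (intro sum_mono mult_left_mono lam_nonneg)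
    fix k
    show "indicator {..a} (V k t) \<le> f (V k t)"
    proof (cases "V k t \<le> a")
      case True
      then have "(V k t - a) / \<epsilon> \<le> 0" using ep by (simp add: divide_nonpos_pos)
      then show ?thesis using True by (simp add: f_def hh_le0)
    qed (simp add: f_def hh_range)
  qed
  have hi: "(\<Sum>k\<in>I. lam K k * f (V k s)) \<le> (\<Sum>k\<in>I. lam K k * indicator {..a+\<epsilon>} (V k s))"
  proof (intro sum_mono mult_left_mono lam_nonneg)
    fix k
    show "f (V k s) \<le> indicator {..a+\<epsilon>} (V k s)"
    proof (cases "V k s \<le> a + \<epsilon>")
      case False
      then have "1 \<le> (V k s - a) / \<epsilon>" using ep by (simp add: field_simps)
      then show ?thesis using False by (simp add: f_def hh_ge1)
    qed (simp add: f_def hh_range)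
  qed
  have "3/2 * (16 / \<epsilon>^2) * \<bar>t - s\<bar> = 24 * \<bar>t - s\<bar> / \<epsilon>^2" by simp
  then show ?thesis using lo hi est by linarith
qed

end


definition sw :: "(real \<Rightarrow> real) \<Rightarrow> (real \<Rightarrow> real) \<Rightarrow> real \<Rightarrow> bool" where
  "sw F G e \<longleftrightarrow> (\<forall>x. F (x - e) - e \<le> G x \<and> G x \<le> F (x + e) + e)"

lemma sw_sym: "sw F G e \<Longrightarrow> sw G F e"
  unfolding sw_def by (metis add_diff_cancel diff_add_cancel diff_le_eq)

lemma sw_trans: "sw F G e \<Longrightarrow> sw G H d \<Longrightarrow> sw F H (e + d)"
  unfolding sw_def
proof (intro allI conjI)
  fix x assume a: "\<forall>x. F (x - e) - e \<le> G x \<and> G x \<le> F (x + e) + e"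
    and b: "\<forall>x. G (x - d) - d \<le> H x \<and> H x \<le> G (x + d) + d"
  have "F (x - (e+d)) - (e+d) \<le> G (x - d) - d" using a[rule_format, of "x-d"] by (simp add: algebra_simps)
  then show "F (x - (e+d)) - (e+d) \<le> H x" using b[rule_format, of x] by linarith
  have "G (x + d) + d \<le> F (x + (e+d)) + (e+d)" using a[rule_format, of "x+d"] by (simp add: algebra_simps)
  then show "H x \<le> F (x + (e+d)) + (e+d)" using b[rule_format, of x] by linarith
qed

lemma sw_trans3: "sw F G e \<Longrightarrow> sw G H e \<Longrightarrow> sw H P e \<Longrightarrow> sw F P (3 * e)"
proof -
  assume "sw F G e" "sw G H e" "sw H P e"
  then have "sw F P (e + e + e)" by (intro sw_trans)
  then show ?thesis by (simp add: algebra_simps)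
qed

lemma diag_conv:
  fixes f :: "nat \<Rightarrow> 'a \<Rightarrow> real"
  assumes S: "countable S" and bdd: "\<And>n q. \<bar>f n q\<bar> \<le> M"
  shows "\<exists>r. strict_mono r \<and> (\<forall>q\<in>S. convergent (\<lambda>n. f (r n) q))"
proof -
  let ?e = "from_nat_into S"
  let ?P = "\<lambda>i s. convergent (\<lambda>k. f (s k) (?e i))"
  interpret nat: subseqs ?P
  proof (unfold convergent_def, unfold subseqs_def, auto)
    fix n :: nat and s :: "nat \<Rightarrow> nat" assume s: "strict_mono s"
    have "bounded {-M..M}"
      using bounded_closed_interval by auto
    moreover have "\<And>k. f (s k) (?e n) \<in> {-M..M}"
      using bdd by (simp add: abs_le_iff minus_le_iff)
    ultimately have "\<exists>l s'. strict_mono s' \<and> ((\<lambda>k. f (s k) (?e n)) \<circ> s') \<longlonglongrightarrow> l"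
      using compact_Icc compact_imp_seq_compact seq_compactE by metis
    thus "\<exists>s'. strict_mono (s'::nat\<Rightarrow>nat) \<and> (\<exists>l. (\<lambda>k. f (s (s' k)) (?e n)) \<longlonglongrightarrow> l)"
      by (auto simp: comp_def)
  qed
  define d where "d = nat.diagseq"
  have subseq: "strict_mono d"
    unfolding d_def using nat.subseq_diagseq by auto
  have rat_cnv: "?P n d" for n
  proof -
    have Pn_seqseq: "?P n (nat.seqseq (Suc n))"
      by (rule nat.seqseq_holds)
    have 1: "(\<lambda>k. f ((nat.seqseq (Suc n) \<circ> (\<lambda>k. nat.fold_reduce (Suc n) k
      (Suc n + k))) k) (?e n)) = (\<lambda>k. f (nat.seqseq (Suc n) k) (?e n)) \<circ>
      (\<lambda>k. nat.fold_reduce (Suc n) k (Suc n + k))"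
      by auto
    have 2: "?P n (d \<circ> ((+) (Suc n)))"
      unfolding d_def nat.diagseq_seqseq 1
      by (intro convergent_subseq_convergent Pn_seqseq nat.subseq_diagonal_rest)
    then obtain L where 3: "(\<lambda>na. f (d (na + Suc n)) (?e n)) \<longlonglongrightarrow> L"
      by (auto simp: add.commute dest: convergentD)
    then have "(\<lambda>k. f (d k) (?e n)) \<longlonglongrightarrow> L"
      by (rule LIMSEQ_offset)
    then show ?thesis
      by (auto simp: convergent_def)
  qed
  have "\<forall>q\<in>S. convergent (\<lambda>n. f (d n) q)"
  proof
    fix q assume "q \<in> S"
    then have "?e (to_nat_on S q) = q" using from_nat_into_to_nat_on[OF S] by blast
    then show "convergent (\<lambda>n. f (d n) q)" using rat_cnv[of "to_nat_on S q"] by simp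
  qed
  then show ?thesis using subseq by blast
qed

lemma grid_sw:
  fixes A B :: "real \<Rightarrow> real" and R h e :: real and J :: nat
  assumes monoA: "mono A" and monoB: "mono B"
    and rA: "\<And>y. 0 \<le> A y \<and> A y \<le> 1" and rB: "\<And>y. 0 \<le> B y \<and> B y \<le> 1"
    and tA: "A (-R) \<le> e" "1 - e \<le> A R" and tB: "B (-R) \<le> e" "1 - e \<le> B R"
    and h: "0 < h" "h \<le> e" and J: "R + h \<le> - R + real J * h"
    and grid: "\<And>j. j \<le> J \<Longrightarrow> \<bar>A (- R + real j * h) - B (- R + real j * h)\<bar> \<le> e"
  shows "sw A B e"
  unfolding sw_def
proof (intro allI conjI)
  fix y
  have mA: "a \<le> b \<Longrightarrow> A a \<le> A b" for a b using monoA by (simp add: monoD)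
  have mB: "a \<le> b \<Longrightarrow> B a \<le> B b" for a b using monoB by (simp add: monoD)
  have "A (y - e) - e \<le> B y \<and> B y \<le> A (y + e) + e"
  proof (cases "y < - R")
    case True
    have "A (y - e) \<le> A (- R)" using True h by (intro mA) auto
    moreover have "B y \<le> B (- R)" using True by (intro mB) auto
    ultimately show ?thesis using rA[of "y+e"] rB[of y] tA tB by linarith
  next
    case False
    show ?thesis
    proof (cases "y \<ge> R")
      case True
      have "A R \<le> A (y + e)" using True h by (intro mA) auto
      moreover have "B R \<le> B y" using True by (intro mB) auto
      ultimately show ?thesis using rA[of "y-e"] rB[of y] tA tB by linarith
    next
      case False2: False
      define k where "k = nat \<lfloor>(y + R) / h\<rfloor>"
      have nn: "0 \<le> (y + R) / h" using False h by simp
      have k1: "real k \<le> (y + R) / h" unfolding k_def using nn by linarith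
      have k2: "(y + R) / h < real k + 1" unfolding k_def using nn by linarith
      have lo: "- R + real k * h \<le> y" using k1 h by (simp add: field_simps)
      have hi: "y < - R + real (k + 1) * h" using k2 h by (simp add: field_simps)
      have "real (k + 1) * h = real k * h + h" by (simp add: algebra_simps)
      then have "real (k + 1) * h < real J * h" using lo J False2 by linarith
      then have kJ: "k + 1 \<le> J" using h by (simp add: mult_less_cancel_right)
      have g1: "\<bar>A (- R + real k * h) - B (- R + real k * h)\<bar> \<le> e" using kJ by (intro grid) simp
      have g2: "\<bar>A (- R + real (k+1) * h) - B (- R + real (k+1) * h)\<bar> \<le> e" by (rule grid[OF kJ])
      have "A (y - e) \<le> A (- R + real k * h)"
        using hi h by (intro mA) (simp add: algebra_simps)
      moreover have "B (- R + real k * h) \<le> B y" using lo by (intro mB)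
      moreover have "A (- R + real (k+1) * h) \<le> A (y + e)"
        using lo h by (intro mA) (simp add: algebra_simps)
      moreover have "B y \<le> B (- R + real (k+1) * h)" using hi by (intro mB) simp
      ultimately show ?thesis using g1 g2 by (simp only: abs_le_iff) linarith
    qed
  qed
  then show "A (y - e) - e \<le> B y" "B y \<le> A (y + e) + e" by auto
qed

lemma arzela:
  fixes F :: "nat \<Rightarrow> real \<Rightarrow> real \<Rightarrow> real"
  assumes monoF: "\<And>n t. mono (F n t)"
    and rcF: "\<And>n t y. continuous (at_right y) (F n t)"
    and rgF: "\<And>n t y. 0 \<le> F n t y \<and> F n t y \<le> 1"
    and eqc: "\<And>e. e > 0 \<Longrightarrow> \<exists>\<delta>>0. \<forall>n. \<forall>s\<in>{0..1}. \<forall>t\<in>{0..1}. \<bar>s - t\<bar> < \<delta> \<longrightarrow> sw (F n s) (F n t) e"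
    and tail: "\<And>e. e > 0 \<Longrightarrow> \<exists>R. \<forall>n. \<forall>t\<in>{0..1}. F n t (- R) \<le> e \<and> 1 - e \<le> F n t R"
  shows "\<exists>(r::nat \<Rightarrow> nat) G. strict_mono r \<and>
     (\<forall>t\<in>{0..1}. mono (G t) \<and> (\<forall>y. continuous (at_right y) (G t)) \<and> (G t \<longlongrightarrow> 0) at_bot \<and> (G t \<longlongrightarrow> 1) at_top) \<and>
     (\<forall>e>0. \<exists>N. \<forall>n\<ge>N. \<forall>t\<in>{0..1}. sw (F (r n) t) (G t) e) \<and>
     (\<forall>e>0. \<exists>\<delta>>0. \<forall>s\<in>{0..1}. \<forall>t\<in>{0..1}. \<bar>s - t\<bar> < \<delta> \<longrightarrow> sw (G s) (G t) e)"
proof -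
  have cQ: "countable (\<rat> \<times> \<rat>)" by (intro countable_SIGMA countable_rat)
  obtain r where r: "strict_mono r" and conv: "\<forall>q\<in>\<rat> \<times> \<rat>. convergent (\<lambda>n. F (r n) (fst q) (snd q))"
    using diag_conv[OF cQ, of "\<lambda>n q. F n (fst q) (snd q)" 1] rgF by (auto simp: abs_le_iff)
  have mF: "a \<le> b \<Longrightarrow> F n t a \<le> F n t b" for n t a b using monoF by (simp add: monoD)
  have ucauchy: "\<exists>N. \<forall>n\<ge>N. \<forall>m\<ge>N. \<forall>t\<in>{0..1}. sw (F (r n) t) (F (r m) t) e" if e: "e > 0" for e
  proof -
    define e1 where "e1 = e / 3"
    have e1: "e1 > 0" using e by (simp add: e1_def)
    obtain \<delta> where d: "\<delta> > 0" and dsw: "\<forall>n. \<forall>s\<in>{0..1}. \<forall>t\<in>{0..1}. \<bar>s - t\<bar> < \<delta> \<longrightarrow> sw (F n s) (F n t) e1"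
      using eqc[OF e1] by blast
    obtain R0 where R0: "\<forall>n. \<forall>t\<in>{0..1}. F n t (- R0) \<le> e1 \<and> 1 - e1 \<le> F n t R0"
      using tail[OF e1] by blast
    define Rn where "Rn = nat \<lceil>R0\<rceil>"
    define R where "R = real Rn"
    have RR0: "R0 \<le> R" unfolding R_def Rn_def by linarith
    have RQ: "R \<in> \<rat>" unfolding R_def by simp
    have tl: "F n t (- R) \<le> e1 \<and> 1 - e1 \<le> F n t R" if "t \<in> {0..1}" for n t
    proof -
      have "F n t (- R0) \<le> e1" "1 - e1 \<le> F n t R0" using R0 that by auto
      moreover have "F n t (- R) \<le> F n t (- R0)" using RR0 by (intro mF) simp
      moreover have "F n t R0 \<le> F n t R" using RR0 by (intro mF)
      ultimately show ?thesis by linarith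
    qed
    obtain M0 where M0: "inverse (real (Suc M0)) < min \<delta> e1"
      using reals_Archimedean[of "min \<delta> e1"] d e1 by auto
    define M where "M = Suc M0"
    define h where "h = 1 / real M"
    have h0: "0 < h" and hd: "h < \<delta>" and he: "h < e1" using M0 by (auto simp: h_def M_def field_simps)
    have hQ: "h \<in> \<rat>" unfolding h_def by simp
    have hM: "real M * h = 1" unfolding h_def M_def by simp
    define J where "J = (2 * Rn + 2) * M"
    have J: "R + h \<le> - R + real J * h"
    proof -
      have "real J * h = (2 * real Rn + 2) * (real M * h)" unfolding J_def by (simp add: algebra_simps)
      then have "real J * h = 2 * R + 2" unfolding R_def using hM by simp
      moreover have "h \<le> 1" using hM h0 unfolding M_def by (simp add: h_def)
      ultimately show ?thesis by simp
    qed
    define Gr where "Gr = (\<lambda>(i, j). (real i * h, - R + real j * h)) ` ({..M} \<times> {..J})"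
    have finGr: "finite Gr" unfolding Gr_def by simp
    have GrQ: "Gr \<subseteq> \<rat> \<times> \<rat>" unfolding Gr_def using hQ RQ by auto
    have "\<forall>q\<in>Gr. eventually (\<lambda>N. \<forall>n\<ge>N. \<forall>m\<ge>N. \<bar>F (r n) (fst q) (snd q) - F (r m) (fst q) (snd q)\<bar> < e1) sequentially"
    proof
      fix q assume "q \<in> Gr"
      then have "Cauchy (\<lambda>n. F (r n) (fst q) (snd q))" using conv GrQ convergent_Cauchy by blast
      from CauchyD[OF this e1] obtain M1 where M1: "\<forall>m\<ge>M1. \<forall>n\<ge>M1. norm (F (r m) (fst q) (snd q) - F (r n) (fst q) (snd q)) < e1" by blast
      show "eventually (\<lambda>N. \<forall>n\<ge>N. \<forall>m\<ge>N. \<bar>F (r n) (fst q) (snd q) - F (r m) (fst q) (snd q)\<bar> < e1) sequentially"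
        by (rule eventually_sequentiallyI[of M1]) (use M1 in auto)
    qed
    from eventually_ball_finite[OF finGr this] obtain N where
      N: "\<forall>q\<in>Gr. \<forall>n\<ge>N. \<forall>m\<ge>N. \<bar>F (r n) (fst q) (snd q) - F (r m) (fst q) (snd q)\<bar> < e1"
      unfolding eventually_sequentially by blast
    have "\<forall>n\<ge>N. \<forall>m\<ge>N. \<forall>t\<in>{0..1}. sw (F (r n) t) (F (r m) t) e"
    proof (intro allI impI ballI)
      fix n m :: nat and t :: real assume n: "n \<ge> N" and m: "m \<ge> N" and t: "t \<in> {0..1}"
      define i where "i = nat \<lfloor>t * real M\<rfloor>"
      have tM: "0 \<le> t * real M" using t by simp
      have i1: "real i \<le> t * real M" unfolding i_def using tM by linarith
      have i2: "t * real M < real i + 1" unfolding i_def using tM by linarith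
      have iM: "i \<le> M"
      proof -
        have "t * real M \<le> real M" using t by (simp add: mult_left_le_one_le)
        then show ?thesis using i1 by linarith
      qed
      define ti where "ti = real i * h"
      have ti1: "ti \<le> t" using i1 unfolding ti_def h_def M_def by (simp add: field_simps)
      have ti2: "t < ti + h" using i2 unfolding ti_def h_def M_def by (simp add: field_simps)
      have ti0: "ti \<in> {0..1}" using ti1 t iM hM h0 unfolding ti_def
        by (auto intro: order_trans[OF mult_right_mono[of "real i" "real M" h]])
      have near: "\<bar>t - ti\<bar> < \<delta>" using ti1 ti2 hd by simp
      have s1: "sw (F (r n) t) (F (r n) ti) e1" using dsw t ti0 near by blast
      have s3: "sw (F (r m) ti) (F (r m) t) e1" using dsw t ti0 near by (simp add: abs_minus_commute)
      have s2: "sw (F (r n) ti) (F (r m) ti) e1"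
      proof (rule grid_sw[OF monoF monoF rgF rgF _ _ _ _ h0 _ J])
        show "F (r n) ti (- R) \<le> e1" "1 - e1 \<le> F (r n) ti R" "F (r m) ti (- R) \<le> e1" "1 - e1 \<le> F (r m) ti R"
          using tl[OF ti0] by auto
        show "h \<le> e1" using he by simp
        fix j assume "j \<le> J"
        then have "(ti, - R + real j * h) \<in> Gr" unfolding Gr_def ti_def using iM by force
        then show "\<bar>F (r n) ti (- R + real j * h) - F (r m) ti (- R + real j * h)\<bar> \<le> e1"
          using N n m by fastforce
      qed
      have "sw (F (r n) t) (F (r m) t) (3 * e1)" by (rule sw_trans3[OF s1 s2 s3])
      then show "sw (F (r n) t) (F (r m) t) e" by (simp add: e1_def)
    qed
    then show ?thesis by blast
  qed
  obtain Nf where Nf: "\<And>e. e > 0 \<Longrightarrow> \<forall>n\<ge>Nf e. \<forall>m\<ge>Nf e. \<forall>t\<in>{0..1}. sw (F (r n) t) (F (r m) t) e"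
    using ucauchy by metis
  define S where "S t y = {F (r n) t (y + e) + e | e n. e > 0 \<and> n \<ge> Nf e}" for t y
  define G where "G t y = Inf (S t y)" for t y
  have Smem: "F (r (Nf 1)) t (y + 1) + 1 \<in> S t y" for t y
    unfolding S_def by (intro CollectI exI[of _ 1] exI[of _ "Nf 1"]) simp
  have Sne: "S t y \<noteq> {}" for t y using Smem by blast
  have Sbdd: "bdd_below (S t y)" for t y unfolding S_def
    by (rule bdd_belowI[of _ 0]) (use rgF in \<open>auto intro: add_nonneg_nonneg\<close>)
  have G_le: "G t y \<le> F (r n) t (y + e) + e" if "e > 0" "n \<ge> Nf e" for t y e n
    unfolding G_def by (rule cInf_lower[OF _ Sbdd]) (use that in \<open>auto simp: S_def\<close>)
  have G_ge: "F (r n) t (y - e) - e \<le> G t y" if "t \<in> {0..1}" "e > 0" "n \<ge> Nf e" for t y e n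
    unfolding G_def
  proof (rule cInf_greatest[OF Sne])
    fix z assume "z \<in> S t y"
    then obtain e' m where z: "z = F (r m) t (y + e') + e'" and e': "e' > 0" and m: "m \<ge> Nf e'"
      unfolding S_def by blast
    define k where "k = max (Nf e) (Nf e')"
    have "sw (F (r n) t) (F (r k) t) e" using Nf[OF that(2)] that k_def by simp
    then have a: "F (r n) t (y - e) - e \<le> F (r k) t y" unfolding sw_def by blast
    have "sw (F (r k) t) (F (r m) t) e'" using Nf[OF e'] that m k_def by simp
    then have "F (r k) t ((y + e') - e') - e' \<le> F (r m) t (y + e')" unfolding sw_def by blast
    then show "F (r n) t (y - e) - e \<le> z" using a z by simp
  qed
  have swG: "sw (F (r n) t) (G t) e" if "t \<in> {0..1}" "e > 0" "n \<ge> Nf e" for t e n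
    unfolding sw_def using G_le G_ge that by blast
  have G0: "0 \<le> G t y" for t y
    unfolding G_def
    by (rule cInf_greatest[OF Sne]) (use rgF in \<open>auto simp: S_def intro: add_nonneg_nonneg\<close>)
  have Gmono: "G t a \<le> G t b" if "a \<le> b" for t a b
    unfolding G_def[of t b]
  proof (rule cInf_greatest[OF Sne])
    fix z assume "z \<in> S t b"
    then obtain e' m where z: "z = F (r m) t (b + e') + e'" and e': "e' > 0" and m: "m \<ge> Nf e'"
      unfolding S_def by blast
    have "G t a \<le> F (r m) t (a + e') + e'" by (rule G_le[OF e' m])
    also have "\<dots> \<le> z" unfolding z using mF[of "a + e'" "b + e'"] that by simp
    finally show "G t a \<le> z" .
  qed
  have Grc: "continuous (at_right y) (G t)" for t y
  proof -
    have "\<exists>\<delta>>0. G t (y + \<delta>) - G t y < \<epsilon>" if eps: "\<epsilon> > 0" for \<epsilon>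
    proof -
      have "Inf (S t y) < G t y + \<epsilon> / 2" using eps by (simp add: G_def)
      then obtain z where "z \<in> S t y" "z < G t y + \<epsilon> / 2" using cInf_lessD[OF Sne] by blast
      then obtain e' m where z: "z = F (r m) t (y + e') + e'" and e': "e' > 0" and m: "m \<ge> Nf e'"
        and zl: "z < G t y + \<epsilon> / 2" unfolding S_def by blast
      have "continuous (at_right (y + e')) (F (r m) t)" by (rule rcF)
      then obtain \<delta> where d: "\<delta> > 0" and dF: "F (r m) t (y + e' + \<delta>) - F (r m) t (y + e') < \<epsilon> / 2"
        using continuous_at_right_real_increasing[of "F (r m) t"] mF eps by (metis half_gt_zero)
      have "G t (y + \<delta>) \<le> F (r m) t (y + \<delta> + e') + e'" by (rule G_le[OF e' m])
      then have "G t (y + \<delta>) - G t y < \<epsilon>" using dF z zl by (simp add: algebra_simps)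
      then show ?thesis using d by blast
    qed
    then show ?thesis using continuous_at_right_real_increasing[of "G t"] Gmono by blast
  qed
  have Gbot: "(G t \<longlongrightarrow> 0) at_bot" if t: "t \<in> {0..1}" for t
  proof (rule tendstoI)
    fix \<epsilon> :: real assume eps: "\<epsilon> > 0"
    define e where "e = \<epsilon> / 3"
    have e: "e > 0" using eps by (simp add: e_def)
    obtain R where R: "\<forall>n. \<forall>t\<in>{0..1}. F n t (- R) \<le> e \<and> 1 - e \<le> F n t R" using tail[OF e] by blast
    show "eventually (\<lambda>y. dist (G t y) 0 < \<epsilon>) at_bot"
      unfolding eventually_at_bot_linorder
    proof (intro exI[of _ "- R - e"] allI impI)
      fix y assume y: "y \<le> - R - e"
      have "G t y \<le> F (r (Nf e)) t (y + e) + e" by (rule G_le[OF e order_refl])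
      also have "\<dots> \<le> F (r (Nf e)) t (- R) + e" using y mF by simp
      also have "\<dots> \<le> 2 * e" using R t by force
      finally show "dist (G t y) 0 < \<epsilon>" using G0[of t y] eps by (simp add: e_def)
    qed
  qed
  have Gtop: "(G t \<longlongrightarrow> 1) at_top" if t: "t \<in> {0..1}" for t
  proof (rule tendstoI)
    fix \<epsilon> :: real assume eps: "\<epsilon> > 0"
    define e where "e = \<epsilon> / 3"
    have e: "e > 0" using eps by (simp add: e_def)
    obtain R where R: "\<forall>n. \<forall>t\<in>{0..1}. F n t (- R) \<le> e \<and> 1 - e \<le> F n t R" using tail[OF e] by blast
    show "eventually (\<lambda>y. dist (G t y) 1 < \<epsilon>) at_top"
      unfolding eventually_at_top_linorder
    proof (intro exI[of _ "R + e"] allI impI)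
      fix y assume y: "y \<ge> R + e"
      have "F (r (Nf e)) t R \<le> F (r (Nf e)) t (y - e)" using y mF by simp
      moreover have "F (r (Nf e)) t (y - e) - e \<le> G t y" by (rule G_ge[OF t e order_refl])
      moreover have "G t y \<le> F (r (Nf e)) t (y + e) + e" by (rule G_le[OF e order_refl])
      moreover have "1 - e \<le> F (r (Nf e)) t R" using R t by force
      moreover have "F (r (Nf e)) t (y + e) \<le> 1" using rgF by blast
      ultimately show "dist (G t y) 1 < \<epsilon>" using eps unfolding dist_real_def e_def
        by (simp only: abs_less_iff) linarith
    qed
  qed
  have Gcont: "\<exists>\<delta>>0. \<forall>s\<in>{0..1}. \<forall>t\<in>{0..1}. \<bar>s - t\<bar> < \<delta> \<longrightarrow> sw (G s) (G t) e" if e: "e > 0" for e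
  proof -
    have e3: "e / 3 > 0" using e by simp
    obtain \<delta> where d: "\<delta> > 0" and dsw: "\<forall>n. \<forall>s\<in>{0..1}. \<forall>t\<in>{0..1}. \<bar>s - t\<bar> < \<delta> \<longrightarrow> sw (F n s) (F n t) (e/3)"
      using eqc[OF e3] by blast
    have "sw (G s) (G t) e" if "s \<in> {0..1}" "t \<in> {0..1}" "\<bar>s - t\<bar> < \<delta>" for s t
    proof -
      have "sw (G s) (F (r (Nf (e/3))) s) (e/3)" by (rule sw_sym, rule swG[OF that(1) e3 order_refl])
      moreover have "sw (F (r (Nf (e/3))) s) (F (r (Nf (e/3))) t) (e/3)" using dsw that by blast
      moreover have "sw (F (r (Nf (e/3))) t) (G t) (e/3)" by (rule swG[OF that(2) e3 order_refl])
      ultimately have "sw (G s) (G t) (3 * (e/3))" by (rule sw_trans3)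
      then show ?thesis by simp
    qed
    then show ?thesis using d by blast
  qed
  have A: "\<forall>t\<in>{0..1}. mono (G t) \<and> (\<forall>y. continuous (at_right y) (G t)) \<and> (G t \<longlongrightarrow> 0) at_bot \<and> (G t \<longlongrightarrow> 1) at_top"
    using Gmono Grc Gbot Gtop by (auto intro: monoI)
  have B: "\<forall>e>0. \<exists>N. \<forall>n\<ge>N. \<forall>t\<in>{0..1}. sw (F (r n) t) (G t) e"
    using swG by blast
  have C: "\<forall>e>0. \<exists>\<delta>>0. \<forall>s\<in>{0..1}. \<forall>t\<in>{0..1}. \<bar>s - t\<bar> < \<delta> \<longrightarrow> sw (G s) (G t) e"
    using Gcont by blast
  show ?thesis
    apply (rule exI[of _ r])
    apply (rule exI[of _ G])
    apply (intro conjI)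
    using r A B C by auto
qed


lemma emp_emeasure:
  assumes "A \<in> sets borel"
  shows "emeasure (emp_measure K v) A = ennreal (\<Sum>k = 1..2*K+1. lam K k * indicator A (v k))"
proof -
  let ?mu = "\<lambda>A. ennreal (\<Sum>k = 1..2*K+1. lam K k * indicator A (v k))"
  have mu_eq: "?mu A = (\<Sum>k = 1..2*K+1. ennreal (lam K k) * indicator A (v k))" for A
    by (subst sum_ennreal[symmetric]) (auto simp: lam_nonneg ennreal_mult ennreal_indicator)
  have sa: "sigma_algebra UNIV (sets borel)"
    by (metis sets.sigma_algebra_axioms space_borel)
  have pos: "positive (sets borel) ?mu"
    by (simp add: positive_def)
  have ca: "countably_additive (sets borel) ?mu"
  proof (unfold countably_additive_def, intro allI impI)
    fix A :: "nat \<Rightarrow> real set" assume "range A \<subseteq> sets borel" "disjoint_family A" "\<Union> (range A) \<in> sets borel"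
    have "(\<Sum>i. ?mu (A i)) = (\<Sum>i. \<Sum>k = 1..2*K+1. ennreal (lam K k) * indicator (A i) (v k))"
      by (simp only: mu_eq)
    also have "\<dots> = (\<Sum>k = 1..2*K+1. \<Sum>i. ennreal (lam K k) * indicator (A i) (v k))"
      by (rule suminf_sum) (rule summableI)
    also have "\<dots> = (\<Sum>k = 1..2*K+1. ennreal (lam K k) * indicator (\<Union>i. A i) (v k))"
      using suminf_indicator[OF \<open>disjoint_family A\<close>] by simp
    also have "\<dots> = ?mu (\<Union>i. A i)" by (simp only: mu_eq)
    finally show "(\<Sum>i. ?mu (A i)) = ?mu (\<Union> (range A))" .
  qed
  show ?thesis unfolding emp_measure_def
    by (rule emeasure_measure_of_sigma[OF sa pos ca assms])
qed

lemma emp_sets: "sets (emp_measure K v) = sets borel"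
proof -
  have "sets (emp_measure K v) = sigma_sets UNIV (sets borel)"
    unfolding emp_measure_def by (rule sets_measure_of) simp
  also have "\<dots> = sets borel" using sets.sigma_sets_eq[of borel] by simp
  finally show ?thesis .
qed

lemma emp_space: "space (emp_measure K v) = UNIV"
  unfolding emp_measure_def by simp

lemma emp_real_distribution: assumes "K \<ge> 1" shows "real_distribution (emp_measure K v)"
proof -
  have "prob_space (emp_measure K v)"
    apply (rule prob_spaceI)
    apply (simp only: emp_space emp_emeasure[of UNIV, OF borel_open[OF open_UNIV]])
    using sum_lam[OF assms] by simp
  then show ?thesis unfolding real_distribution_def real_distribution_axioms_def
    by (simp add: emp_sets)
qed

lemma emp_cdf: "cdf (emp_measure K v) x = (\<Sum>k = 1..2*K+1. lam K k * indicator {..x} (v k))"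
proof -
  have "cdf (emp_measure K v) x = enn2real (emeasure (emp_measure K v) {..x})"
    by (simp add: cdf_def measure_def)
  also have "\<dots> = (\<Sum>k = 1..2*K+1. lam K k * indicator {..x} (v k))"
    by (simp only: emp_emeasure[of "{..x}", OF atMost_borel])
       (rule enn2real_ennreal, rule sum_nonneg, simp add: lam_nonneg)
  finally show ?thesis .
qed

lemma levy_lt: assumes "sw (cdf M) (cdf M') e" "0 < e" "e < d" shows "levy_dist M M' < d"
proof -
  let ?S = "{e. e > 0 \<and> (\<forall>x. cdf M (x - e) - e \<le> cdf M' x \<and> cdf M' x \<le> cdf M (x + e) + e)}"
  have "e \<in> ?S" using assms(1,2) by (simp add: sw_def)
  moreover have "bdd_below ?S" by (rule bdd_belowI[of _ 0]) auto
  ultimately have "Inf ?S \<le> e" by (rule cInf_lower)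
  then show ?thesis using assms(3) unfolding levy_dist_def by simp
qed


context sys begin

lemma x_bound: assumes "k \<in> I" shows "- 2 \<le> x k \<and> x k \<le> 2"
proof -
  consider "k \<le> K" | "k = K+1" | "k \<ge> K+2" by linarith
  then show ?thesis
  proof cases
    case 1 then show ?thesis using range[of k] assms by auto
  next
    case 2 then show ?thesis using mid by simp
  next
    case 3
    have s: "sg k \<le> K" "1 \<le> sg k" using 3 assms by (auto simp: sg_def)
    have "x (sg k) = - x k" by (rule sg_x[OF assms])
    then show ?thesis using range[OF s(2) s(1)] by auto
  qed
qed

lemma sw_loc:
  assumes "0 \<le> s" "0 \<le> t" "0 < e" "24 * \<bar>t - s\<bar> \<le> e^3"
  shows "sw (\<lambda>y. \<Sum>k\<in>I. lam K k * indicator {..y} (V k s)) (\<lambda>y. \<Sum>k\<in>I. lam K k * indicator {..y} (V k t)) e"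
  unfolding sw_def
proof (intro allI conjI)
  fix y
  have b: "24 * \<bar>t - s\<bar> / e^2 \<le> e"
  proof -
    have "24 * \<bar>t - s\<bar> \<le> e * e^2" using assms(4) by (simp add: power3_eq_cube power2_eq_square)
    then show ?thesis using assms(3) by (simp add: divide_le_eq)
  qed
  have b2: "24 * \<bar>s - t\<bar> / e^2 \<le> e" using b by (simp add: abs_minus_commute)
  show "(\<Sum>k\<in>I. lam K k * indicator {..y - e} (V k s)) - e \<le> (\<Sum>k\<in>I. lam K k * indicator {..y} (V k t))"
    using cdf_est[OF assms(2) assms(1) assms(3), of "y - e"] b2 by simp
  show "(\<Sum>k\<in>I. lam K k * indicator {..y} (V k t)) \<le> (\<Sum>k\<in>I. lam K k * indicator {..y + e} (V k s)) + e"
    using cdf_est[OF assms(1) assms(2) assms(3), of y] b by simp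
qed

lemma tail_lo:
  assumes "0 \<le> t" "t \<le> 1" "0 < \<epsilon>"
  shows "(\<Sum>k\<in>I. lam K k * indicator {..-3-\<epsilon>} (V k t)) \<le> 24 / \<epsilon>^2"
proof -
  have z: "(\<Sum>k\<in>I. lam K k * indicator {..-3} (V k 0)) = 0"
    by (rule sum.neutral) (use x_bound init in force)
  have "(\<Sum>k\<in>I. lam K k * indicator {..-3-\<epsilon>} (V k t)) \<le> (\<Sum>k\<in>I. lam K k * indicator {..-3-\<epsilon>+\<epsilon>} (V k 0)) + 24 * \<bar>t - 0\<bar> / \<epsilon>^2"
    by (rule cdf_est[OF order_refl assms(1) assms(3)])
  also have "\<dots> \<le> 24 / \<epsilon>^2" using z assms by (simp add: divide_right_mono)
  finally show ?thesis .
qed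

lemma tail_hi:
  assumes "0 \<le> t" "t \<le> 1" "0 < \<epsilon>"
  shows "1 - 24 / \<epsilon>^2 \<le> (\<Sum>k\<in>I. lam K k * indicator {..3+\<epsilon>} (V k t))"
proof -
  have o: "(\<Sum>k\<in>I. lam K k * indicator {..3} (V k 0)) = 1"
  proof -
    have "(\<Sum>k\<in>I. lam K k * indicator {..3} (V k 0)) = (\<Sum>k\<in>I. lam K k)"
      by (rule sum.cong[OF refl]) (use x_bound init in force)
    then show ?thesis using sum_lam[OF K1] by simp
  qed
  have "(\<Sum>k\<in>I. lam K k * indicator {..3} (V k 0)) \<le> (\<Sum>k\<in>I. lam K k * indicator {..3+\<epsilon>} (V k t)) + 24 * \<bar>0 - t\<bar> / \<epsilon>^2"
    by (rule cdf_est[OF assms(1) order_refl assms(3)])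
  moreover have "24 * \<bar>0 - t\<bar> / \<epsilon>^2 \<le> 24 / \<epsilon>^2" using assms by (simp add: divide_right_mono)
  ultimately show ?thesis using o by linarith
qed

end


theorem mainTheorem5:
  fixes x :: "nat \<Rightarrow> nat \<Rightarrow> real" and V :: "nat \<Rightarrow> nat \<Rightarrow> real \<Rightarrow> real"
  assumes incr: "\<And>K i j. K \<ge> 1 \<Longrightarrow> 1 \<le> i \<Longrightarrow> i < j \<Longrightarrow> j \<le> 2*K+1 \<Longrightarrow> x K i < x K j"
    and range: "\<And>K k. K \<ge> 1 \<Longrightarrow> 1 \<le> k \<Longrightarrow> k \<le> K \<Longrightarrow> x K k \<in> {-2..-1}"
    and symm: "\<And>K k. K \<ge> 1 \<Longrightarrow> 1 \<le> k \<Longrightarrow> k \<le> K \<Longrightarrow> x K (2*K+2-k) = - x K k"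
    and mid: "\<And>K. K \<ge> 1 \<Longrightarrow> x K (K+1) = 0"
    and init: "\<And>K k. K \<ge> 1 \<Longrightarrow> k \<in> {1..2*K+1} \<Longrightarrow> V K k 0 = x K k"
    and distinct: "\<And>K k j t. K \<ge> 1 \<Longrightarrow> k \<in> {1..2*K+1} \<Longrightarrow> j \<in> {1..2*K+1} \<Longrightarrow> j \<noteq> k
                   \<Longrightarrow> t \<ge> 0 \<Longrightarrow> V K k t \<noteq> V K j t"
    and ode: "\<And>K k t. K \<ge> 1 \<Longrightarrow> k \<in> {1..2*K+1} \<Longrightarrow> t \<ge> 0 \<Longrightarrow>
       (V K k has_real_derivative
          (\<Sum>j\<in>{1..2*K+1} - {k}. 2 * (lam K k + lam K j) / (V K k t - V K j t))) (at t within {0..})"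
  shows "\<exists>T0>0. M_tight T0 (\<lambda>n t. emp_measure (Suc n) (\<lambda>k. V (Suc n) k t))"
proof -
  define \<alpha> where "\<alpha> n t = emp_measure (Suc n) (\<lambda>k. V (Suc n) k t)" for n t
  define F where "F n t y = cdf (\<alpha> n t) y" for n t y
  have sysn: "sys (Suc n) (V (Suc n)) (x (Suc n))" for n
  proof (unfold_locales)
    show "1 \<le> Suc n" by simp
    show "\<And>i j. 1 \<le> i \<Longrightarrow> i < j \<Longrightarrow> j \<le> 2 * Suc n + 1 \<Longrightarrow> x (Suc n) i < x (Suc n) j"
      using incr by simp
    show "\<And>k. 1 \<le> k \<Longrightarrow> k \<le> Suc n \<Longrightarrow> x (Suc n) k \<in> {- 2..- 1}"
      using range by simp
    show "\<And>k. 1 \<le> k \<Longrightarrow> k \<le> Suc n \<Longrightarrow> x (Suc n) (2 * Suc n + 2 - k) = - x (Suc n) k"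
      by (rule symm) auto
    show "x (Suc n) (Suc n + 1) = 0" using mid by simp
    show "\<And>k. k \<in> {1..2 * Suc n + 1} \<Longrightarrow> V (Suc n) k 0 = x (Suc n) k"
      using init by simp
    show "\<And>k j t. k \<in> {1..2 * Suc n + 1} \<Longrightarrow> j \<in> {1..2 * Suc n + 1} \<Longrightarrow> j \<noteq> k \<Longrightarrow> 0 \<le> t \<Longrightarrow> V (Suc n) k t \<noteq> V (Suc n) j t"
      using distinct by simp
    show "\<And>k t. k \<in> {1..2 * Suc n + 1} \<Longrightarrow> 0 \<le> t \<Longrightarrow>
      (V (Suc n) k has_real_derivative (\<Sum>j\<in>{1..2 * Suc n + 1} - {k}. 2 * (lam (Suc n) k + lam (Suc n) j) / (V (Suc n) k t - V (Suc n) j t))) (at t within {0..})"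
      by (rule ode) auto
  qed
  have rd: "real_distribution (\<alpha> n t)" for n t unfolding \<alpha>_def by (rule emp_real_distribution) simp
  have fbm: "finite_borel_measure (\<alpha> n t)" for n t by (rule real_distribution.finite_borel_measure_M[OF rd])
  have Fsum: "F n t = (\<lambda>y. \<Sum>k\<in>{1..2*Suc n+1}. lam (Suc n) k * indicator {..y} (V (Suc n) k t))" for n t
    unfolding F_def \<alpha>_def by (rule ext) (rule emp_cdf)
  have monoF: "mono (F n t)" for n t
    unfolding F_def by (intro monoI finite_borel_measure.cdf_nondecreasing[OF fbm])
  have rcF: "continuous (at_right y) (F n t)" for n t y
    unfolding F_def[abs_def] using finite_borel_measure.cdf_is_right_cont[OF fbm] by simp
  have rgF: "0 \<le> F n t y \<and> F n t y \<le> 1" for n t y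
    unfolding F_def using finite_borel_measure.cdf_nonneg[OF fbm] real_distribution.cdf_bounded_prob[OF rd] by auto
  have eqc: "\<exists>\<delta>>0. \<forall>n. \<forall>s\<in>{0..1}. \<forall>t\<in>{0..1}. \<bar>s - t\<bar> < \<delta> \<longrightarrow> sw (F n s) (F n t) e" if e: "e > 0" for e
  proof (intro exI[of _ "e^3 / 24"] conjI allI ballI impI)
    show "0 < e^3 / 24" using e by simp
    fix n :: nat and s t :: real assume s: "s \<in> {0..1}" and t: "t \<in> {0..1}" and st: "\<bar>s - t\<bar> < e^3 / 24"
    have "24 * \<bar>t - s\<bar> \<le> e^3" using st by (simp add: abs_minus_commute)
    then show "sw (F n s) (F n t) e"
      unfolding Fsum using sys.sw_loc[OF sysn, of s t e] s t e by simp
  qed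
  have tail: "\<exists>R. \<forall>n. \<forall>t\<in>{0..1}. F n t (- R) \<le> e \<and> 1 - e \<le> F n t R" if e: "e > 0" for e
  proof -
    define \<epsilon> where "\<epsilon> = 24 / e + 1"
    have ep1: "1 \<le> \<epsilon>" and ep2: "24 / e \<le> \<epsilon>" using e by (auto simp: \<epsilon>_def)
    have "\<epsilon> \<le> \<epsilon>^2" using ep1 by (simp add: power2_eq_square)
    then have "24 / e \<le> \<epsilon>^2" using ep2 by linarith
    then have "24 \<le> e * \<epsilon>^2" using e by (simp add: divide_le_eq mult.commute)
    then have b: "24 / \<epsilon>^2 \<le> e" using ep1 by (simp add: divide_le_eq mult.commute)
    have ep: "0 < \<epsilon>" using ep1 by simp
    show ?thesis
    proof (intro exI[of _ "3 + \<epsilon>"] allI ballI conjI)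
      fix n :: nat and t :: real assume t: "t \<in> {0..1}"
      have "F n t (- 3 - \<epsilon>) \<le> 24 / \<epsilon>^2"
        unfolding Fsum using sys.tail_lo[OF sysn, of t \<epsilon>] t ep by simp
      then show "F n t (- (3 + \<epsilon>)) \<le> e" using b by simp
      have "1 - 24 / \<epsilon>^2 \<le> F n t (3 + \<epsilon>)"
        unfolding Fsum using sys.tail_hi[OF sysn, of t \<epsilon>] t ep by simp
      then show "1 - e \<le> F n t (3 + \<epsilon>)" using b by simp
    qed
  qed
  obtain r :: "nat \<Rightarrow> nat" and G where r: "strict_mono r"
    and A: "\<forall>t\<in>{0..1}. mono (G t) \<and> (\<forall>y. continuous (at_right y) (G t)) \<and> (G t \<longlongrightarrow> 0) at_bot \<and> (G t \<longlongrightarrow> 1) at_top"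
    and B: "\<forall>e>0. \<exists>N. \<forall>n\<ge>N. \<forall>t\<in>{0..1}. sw (F (r n) t) (G t) e"
    and C: "\<forall>e>0. \<exists>\<delta>>0. \<forall>s\<in>{0..1}. \<forall>t\<in>{0..1}. \<bar>s - t\<bar> < \<delta> \<longrightarrow> sw (G s) (G t) e"
    using arzela[of F, OF monoF rcF rgF eqc tail] by blast
  define \<beta> where "\<beta> t = interval_measure (G t)" for t
  have Gnd: "G t a \<le> G t b" if "t \<in> {0..1}" "a \<le> b" for t a b using A that by (simp add: monoD)
  have brd: "real_distribution (\<beta> t)" if "t \<in> {0..1}" for t
    unfolding \<beta>_def by (rule real_distribution_interval_measure) (use A that Gnd in auto)
  have bcdf: "cdf (\<beta> t) = G t" if "t \<in> {0..1}" for t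
    unfolding \<beta>_def by (rule cdf_interval_measure) (use A that Gnd in auto)
  have Mn: "\<alpha> n \<in> M_space 1" for n
    unfolding M_space_def
  proof (intro CollectI conjI ballI allI impI)
    fix t :: real show "real_distribution (\<alpha> n t)" by (rule rd)
  next
    fix t e :: real assume t: "t \<in> {0..1}" and e: "0 < e"
    obtain \<delta> where d: "\<delta> > 0" and dsw: "\<forall>n. \<forall>s\<in>{0..1}. \<forall>t\<in>{0..1}. \<bar>s - t\<bar> < \<delta> \<longrightarrow> sw (F n s) (F n t) (e/2)"
      using eqc[of "e/2"] e by auto
    show "\<exists>d>0. \<forall>s\<in>{0..1}. \<bar>s - t\<bar> < d \<longrightarrow> levy_dist (\<alpha> n s) (\<alpha> n t) < e"
    proof (intro exI[of _ \<delta>] conjI ballI impI d)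
      fix s assume "s \<in> {0..1}" "\<bar>s - t\<bar> < \<delta>"
      then have "sw (F n s) (F n t) (e/2)" using dsw t by blast
      then have "sw (cdf (\<alpha> n s)) (cdf (\<alpha> n t)) (e/2)" unfolding F_def[abs_def] by simp
      then show "levy_dist (\<alpha> n s) (\<alpha> n t) < e" by (rule levy_lt) (use e in auto)
    qed
  qed
  have Mb: "\<beta> \<in> M_space 1"
    unfolding M_space_def
  proof (intro CollectI conjI ballI allI impI)
    fix t :: real assume "t \<in> {0..1}" then show "real_distribution (\<beta> t)" by (rule brd)
  next
    fix t e :: real assume t: "t \<in> {0..1}" and e: "0 < e"
    obtain \<delta> where d: "\<delta> > 0" and dsw: "\<forall>s\<in>{0..1}. \<forall>t\<in>{0..1}. \<bar>s - t\<bar> < \<delta> \<longrightarrow> sw (G s) (G t) (e/2)"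
      using C e by (meson half_gt_zero)
    show "\<exists>d>0. \<forall>s\<in>{0..1}. \<bar>s - t\<bar> < d \<longrightarrow> levy_dist (\<beta> s) (\<beta> t) < e"
    proof (intro exI[of _ \<delta>] conjI ballI impI d)
      fix s assume s: "s \<in> {0..1}" "\<bar>s - t\<bar> < \<delta>"
      then have "sw (G s) (G t) (e/2)" using dsw t by blast
      then have "sw (cdf (\<beta> s)) (cdf (\<beta> t)) (e/2)" using bcdf s t by simp
      then show "levy_dist (\<beta> s) (\<beta> t) < e" by (rule levy_lt) (use e in auto)
    qed
  qed
  have conv: "M_conv 1 (\<alpha> \<circ> r) \<beta>"
    unfolding M_conv_def
  proof (intro conjI Mb allI impI)
    fix e :: real assume e: "0 < e"
    obtain N where N: "\<forall>n\<ge>N. \<forall>t\<in>{0..1}. sw (F (r n) t) (G t) (e/2)"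
      using B e by (meson half_gt_zero)
    show "\<exists>n0. \<forall>n\<ge>n0. \<forall>t\<in>{0..1}. levy_dist ((\<alpha> \<circ> r) n t) (\<beta> t) < e"
    proof (intro exI[of _ N] allI impI ballI)
      fix n :: nat and t :: real assume n: "N \<le> n" and t: "t \<in> {0..1}"
      have "sw (F (r n) t) (G t) (e/2)" using N n t by blast
      then have "sw (cdf (\<alpha> (r n) t)) (cdf (\<beta> t)) (e/2)" using bcdf t unfolding F_def[abs_def] by simp
      then show "levy_dist ((\<alpha> \<circ> r) n t) (\<beta> t) < e" by (simp, rule levy_lt) (use e in auto)
    qed
  qed
  have "M_tight 1 \<alpha>" unfolding M_tight_def using Mn r conv by blast
  moreover have "\<alpha> = (\<lambda>n t. emp_measure (Suc n) (\<lambda>k. V (Suc n) k t))" by (simp add: \<alpha>_def fun_eq_iff)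
  ultimately show ?thesis by (intro exI[of _ 1]) simp
qed


end
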